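(* Let $G$ be a simple loopless graph on $[L]$ and $p\ge1$. For each $v\in[L]$ let $|c^*(v)|$ denote the size of the largest clique in $G$ containing $v$. For any Dyck path $\varepsilon\in D_{2p}$ and any labelling $i=(i_k)_{k\in\varepsilon^\uparrow}\in[L]^{\varepsilon^\uparrow}$, \[ |\mathcal{P}^{(\varepsilon)}_{2p}(G,i)|\le\min\Big\{\prod_{k\in\varepsilon^\uparrow}|c^*(i_k)|,\ p!\Big\}. \] In particular, $|\mathcal{P}^{(\varepsilon)}_{2p}(G,i)|\le\min(\omega(G)^p,p!)$, where $\omega(G)$ is the clique number of $G$.
   Context: $\mathcal{T}(G)=\langle v\in[L]: uv=vu \text{ for } (u,v)\in E(G)\rangle$ is the trace monoid of $G$ (words in letters $[L]$ modulo commutation of adjacent letters), $e$ the empty word, $|w|$ the length of $w$. Words are adjacent, $w_1\leftrightarrow w_2$, if $w_1=vw_2$ or $w_2=vw_1$ for a letter $v\in[L]$. $\mathcal{P}_{2p}(G)=\{w\in\mathcal{T}(G)^{2p}: e\leftrightarrow w_1\leftrightarrow\cdots\leftrightarrow w_{2p}=e\}$. $D_{2p}$ is the set of Dyck paths $\varepsilon\in\{+1,-1\}^{2p}$ (all partial sums nonnegative, total sum zero); $\varepsilon^\uparrow=\{k:\varepsilon_k=+1\}$. For $w\in\mathcal{P}_{2p}(G)$, with $w_0:=e$, define $\varepsilon(w)_k=+1$ if $|w_k|>|w_{k-1}|$ and $-1$ otherwise; this is a Dyck path. $\mathcal{P}^{(\varepsilon)}_{2p}(G)=\{w\in\mathcal{P}_{2p}(G):\varepsilon(w)=\varepsilon\}$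 and, for $i\in[L]^{\varepsilon^\uparrow}$, $\mathcal{P}^{(\varepsilon)}_{2p}(G,i)=\{w\in\mathcal{P}^{(\varepsilon)}_{2p}(G): w_k=i_kw_{k-1}\text{ for all }k\in\varepsilon^\uparrow\}$. *)

theory Defs
  imports Main
begin

definition simple_graph :: "nat \<Rightarrow> (nat \<Rightarrow> nat \<Rightarrow> bool) \<Rightarrow> bool" where
  "simple_graph L E \<longleftrightarrow> (\<forall>a b. E a b \<longrightarrow> E b a) \<and> (\<forall>a. \<not> E a a)
     \<and> (\<forall>a b. E a b \<longrightarrow> a \<in> {1..L} \<and> b \<in> {1..L})"

definition comm_step :: "(nat \<Rightarrow> nat \<Rightarrow> bool) \<Rightarrow> (nat list \<times> nat list) set" where
  "comm_step E = {(u @ [a, b] @ v, u @ [b, a] @ v) | u v a b. E a b}"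

text \<open>The element of the trace monoid represented by a word: its equivalence class.\<close>
definition trace_of :: "(nat \<Rightarrow> nat \<Rightarrow> bool) \<Rightarrow> nat list \<Rightarrow> nat list set" where
  "trace_of E w = {w'. (w, w') \<in> (comm_step E)\<^sup>*}"

definition traces :: "nat \<Rightarrow> (nat \<Rightarrow> nat \<Rightarrow> bool) \<Rightarrow> nat list set set" where
  "traces L E = trace_of E ` lists {1..L}"

definition tr_empty :: "(nat \<Rightarrow> nat \<Rightarrow> bool) \<Rightarrow> nat list set" where
  "tr_empty E = trace_of E []"

text \<open>Length of a trace (all representatives have the same length).\<close>
definition tlen :: "nat list set \<Rightarrow> nat" where
  "tlen T = length (SOME w. w \<in> T)"

definition lmul_eq :: "(nat \<Rightarrow> nat \<Rightarrow> bool) \<Rightarrow> nat list set \<Rightarrow> nat \<Rightarrow> nat list set \<Rightarrow> bool" where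
  "lmul_eq E T1 v T2 \<longleftrightarrow> (\<exists>w\<in>T2. T1 = trace_of E (v # w))"

definition tr_adj :: "nat \<Rightarrow> (nat \<Rightarrow> nat \<Rightarrow> bool) \<Rightarrow> nat list set \<Rightarrow> nat list set \<Rightarrow> bool" where
  "tr_adj L E T1 T2 \<longleftrightarrow> (\<exists>v\<in>{1..L}. lmul_eq E T1 v T2 \<or> lmul_eq E T2 v T1)"

text \<open>A path (w_1,...,w_{2p}) is a list ws of length 2p with ws ! (k-1) = w_k; w_0 = e.\<close>
definition pw :: "(nat \<Rightarrow> nat \<Rightarrow> bool) \<Rightarrow> nat list set list \<Rightarrow> nat \<Rightarrow> nat list set" where
  "pw E ws k = (if k = 0 then tr_empty E else ws ! (k - 1))"

definition paths :: "nat \<Rightarrow> (nat \<Rightarrow> nat \<Rightarrow> bool) \<Rightarrow> nat \<Rightarrow> nat list set list set" where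
  "paths L E p = {ws. length ws = 2 * p \<and> set ws \<subseteq> traces L E
      \<and> (\<forall>k\<in>{1..2*p}. tr_adj L E (pw E ws (k - 1)) (pw E ws k))
      \<and> pw E ws (2 * p) = tr_empty E}"

text \<open>Dyck paths of length 2p, as lists eps with eps ! (k-1) = epsilon_k.\<close>
definition dyck :: "nat \<Rightarrow> int list \<Rightarrow> bool" where
  "dyck p eps \<longleftrightarrow> length eps = 2 * p \<and> set eps \<subseteq> {1, -1}
     \<and> (\<forall>j\<le>2 * p. sum_list (take j eps) \<ge> 0) \<and> sum_list eps = 0"

definition up_steps :: "int list \<Rightarrow> nat set" where
  "up_steps eps = {k \<in> {1..length eps}. eps ! (k - 1) = 1}"

definition path_eps :: "(nat \<Rightarrow> nat \<Rightarrow> bool) \<Rightarrow> nat list set list \<Rightarrow> int list" where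
  "path_eps E ws = map (\<lambda>k. if tlen (pw E ws k) > tlen (pw E ws (k - 1)) then 1 else -1)
                        [1..<Suc (length ws)]"

definition paths_eps :: "nat \<Rightarrow> (nat \<Rightarrow> nat \<Rightarrow> bool) \<Rightarrow> nat \<Rightarrow> int list \<Rightarrow> nat list set list set" where
  "paths_eps L E p eps = {ws \<in> paths L E p. path_eps E ws = eps}"

definition paths_eps_lab :: "nat \<Rightarrow> (nat \<Rightarrow> nat \<Rightarrow> bool) \<Rightarrow> nat \<Rightarrow> int list \<Rightarrow> (nat \<Rightarrow> nat)
     \<Rightarrow> nat list set list set" where
  "paths_eps_lab L E p eps i = {ws \<in> paths_eps L E p eps.
      \<forall>k\<in>up_steps eps. lmul_eq E (pw E ws k) (i k) (pw E ws (k - 1))}"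

definition is_clique :: "nat \<Rightarrow> (nat \<Rightarrow> nat \<Rightarrow> bool) \<Rightarrow> nat set \<Rightarrow> bool" where
  "is_clique L E C \<longleftrightarrow> C \<subseteq> {1..L} \<and> (\<forall>a\<in>C. \<forall>b\<in>C. a \<noteq> b \<longrightarrow> E a b)"

definition max_clique_at :: "nat \<Rightarrow> (nat \<Rightarrow> nat \<Rightarrow> bool) \<Rightarrow> nat \<Rightarrow> nat" where
  "max_clique_at L E v = Max {card C | C. is_clique L E C \<and> v \<in> C}"

definition clique_number :: "nat \<Rightarrow> (nat \<Rightarrow> nat \<Rightarrow> bool) \<Rightarrow> nat" where
  "clique_number L E = Max {card C | C. is_clique L E C}"

end

theory Submission
  imports Defs "HOL-Library.Multiset"
begin


lemma comm_step_iff: "(x,y) \<in> comm_step E \<longleftrightarrow> (\<exists>u v a b. x = u@[a,b]@v \<and> y = u@[b,a]@v \<and> E a b)"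
  by (auto simp: comm_step_def)

lemma comm_sym: assumes "\<forall>a b. E a b \<longrightarrow> E b a" "(x,y) \<in> comm_step E" shows "(y,x) \<in> comm_step E"
proof -
  obtain u v a b where "x = u@[a,b]@v" "y = u@[b,a]@v" "E a b" using assms(2) comm_step_iff by blast
  then show ?thesis using assms(1) unfolding comm_step_iff by blast
qed

lemma rt_sym: assumes sym: "\<forall>a b. E a b \<longrightarrow> E b a" and "(x,y) \<in> (comm_step E)\<^sup>*"
  shows "(y,x) \<in> (comm_step E)\<^sup>*"
  using assms(2)
proof (induction rule: rtrancl_induct)
  case base show ?case by simp
next
  case (step y z)
  then have "(z,y) \<in> comm_step E" using comm_sym sym by blast
  then show ?case using step.IH by (meson converse_rtrancl_into_rtrancl)
qed

lemma trace_eq_iff: assumes sym: "\<forall>a b. E a b \<longrightarrow> E b a"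
  shows "trace_of E x = trace_of E y \<longleftrightarrow> (x,y) \<in> (comm_step E)\<^sup>*"
proof
  assume "trace_of E x = trace_of E y"
  moreover have "y \<in> trace_of E y" by (simp add: trace_of_def)
  ultimately have "y \<in> trace_of E x" by simp
  then show "(x,y) \<in> (comm_step E)\<^sup>*" by (simp add: trace_of_def)
next
  assume xy: "(x,y) \<in> (comm_step E)\<^sup>*"
  then have yx: "(y,x) \<in> (comm_step E)\<^sup>*" using rt_sym sym by blast
  show "trace_of E x = trace_of E y"
    unfolding trace_of_def using xy yx by (meson rtrancl_trans)
qed

lemma rt_mset: "(x,y) \<in> (comm_step E)\<^sup>* \<Longrightarrow> mset x = mset y"
proof (induction rule: rtrancl_induct)
  case base show ?case by simp
next
  case (step y z)
  then show ?case by (auto simp: comm_step_iff)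
qed

lemma rt_length: "(x,y) \<in> (comm_step E)\<^sup>* \<Longrightarrow> length x = length y"
  by (metis rt_mset size_mset)

lemma rt_set: "(x,y) \<in> (comm_step E)\<^sup>* \<Longrightarrow> set x = set y"
  by (metis rt_mset set_mset_mset)

lemma tlen_trace: "tlen (trace_of E x) = length x"
proof -
  have "x \<in> trace_of E x" by (simp add: trace_of_def)
  then have "(SOME w. w \<in> trace_of E x) \<in> trace_of E x" by (rule someI)
  then show ?thesis unfolding tlen_def trace_of_def using rt_length by auto
qed

lemma rt_cons: "(x,y) \<in> (comm_step E)\<^sup>* \<Longrightarrow> (v#x, v#y) \<in> (comm_step E)\<^sup>*"
proof (induction rule: rtrancl_induct)
  case base show ?case by simp
next
  case (step y z)
  obtain u t a b where "y = u@[a,b]@t" "z = u@[b,a]@t" "E a b" using step(2) comm_step_iff by blast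
  then have "(v#y, v#z) \<in> comm_step E" unfolding comm_step_iff
    by (intro exI[of _ "v#u"] exI[of _ t] exI[of _ a] exI[of _ b]) auto
  then show ?case using step.IH by (meson rtrancl_into_rtrancl)
qed

lemma lmul_trace: assumes sym: "\<forall>a b. E a b \<longrightarrow> E b a"
  shows "lmul_eq E T v (trace_of E x) \<longleftrightarrow> T = trace_of E (v#x)"
proof
  assume "lmul_eq E T v (trace_of E x)"
  then obtain w where w: "w \<in> trace_of E x" "T = trace_of E (v#w)" unfolding lmul_eq_def by blast
  then have "(v#x, v#w) \<in> (comm_step E)\<^sup>*" using rt_cons by (simp add: trace_of_def)
  then show "T = trace_of E (v#x)" using w trace_eq_iff sym by metis
next
  assume "T = trace_of E (v#x)"
  then show "lmul_eq E T v (trace_of E x)" unfolding lmul_eq_def by (auto simp: trace_of_def)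
qed

lemma step_remove1: assumes irr: "\<forall>a. \<not>E a a" and st: "(x,y) \<in> comm_step E"
  shows "(remove1 w x, remove1 w y) \<in> (comm_step E)\<^sup>*"
proof -
  obtain u t a b where x: "x = u@[a,b]@t" and y: "y = u@[b,a]@t" and ab: "E a b"
    using st comm_step_iff by blast
  have "a \<noteq> b" using irr ab by auto
  show ?thesis
  proof (cases "w \<in> set u")
    case True
    then have "remove1 w x = remove1 w u @ [a,b]@t" "remove1 w y = remove1 w u @ [b,a]@t"
      by (simp_all add: x y remove1_append)
    then have "(remove1 w x, remove1 w y) \<in> comm_step E" using ab unfolding comm_step_iff by blast
    then show ?thesis by blast
  next
    case False
    then have rx: "remove1 w x = u @ remove1 w (a#b#t)" "remove1 w y = u @ remove1 w (b#a#t)"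
      by (simp_all add: x y remove1_append)
    consider "w = a" | "w = b" | "w \<noteq> a \<and> w \<noteq> b" by blast
    then show ?thesis
    proof cases
      case 1
      then have "remove1 w x = remove1 w y" using rx \<open>a\<noteq>b\<close> by simp
      then show ?thesis by simp
    next
      case 2
      then have "remove1 w x = remove1 w y" using rx \<open>a\<noteq>b\<close> by simp
      then show ?thesis by simp
    next
      case 3
      then have "remove1 w x = u @ [a,b] @ remove1 w t" "remove1 w y = u @ [b,a] @ remove1 w t"
        using rx by auto
      then have "(remove1 w x, remove1 w y) \<in> comm_step E" using ab unfolding comm_step_iff by blast
      then show ?thesis by blast
    qed
  qed
qed

lemma rt_remove1: assumes irr: "\<forall>a. \<not>E a a"
  shows "(x,y) \<in> (comm_step E)\<^sup>* \<Longrightarrow> (remove1 w x, remove1 w y) \<in> (comm_step E)\<^sup>*"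
proof (induction rule: rtrancl_induct)
  case base show ?case by simp
next
  case (step y z)
  then show ?case using step_remove1[OF irr step(2)] by (meson rtrancl_trans)
qed

lemma rt_filter: assumes irr: "\<forall>a. \<not>E a a" and n1: "\<not> E a0 b0" and n2: "\<not> E b0 a0"
  shows "(x,y) \<in> (comm_step E)\<^sup>* \<Longrightarrow> filter (\<lambda>c. c = a0 \<or> c = b0) x = filter (\<lambda>c. c = a0 \<or> c = b0) y"
proof (induction rule: rtrancl_induct)
  case base show ?case by simp
next
  case (step y z)
  obtain u t a b where y: "y = u@[a,b]@t" and z: "z = u@[b,a]@t" and ab: "E a b"
    using step(2) comm_step_iff by blast
  have "a \<noteq> b" using irr ab by auto
  then have "\<not> ((a = a0 \<or> a = b0) \<and> (b = a0 \<or> b = b0))" using ab n1 n2 by auto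
  then have "filter (\<lambda>c. c = a0 \<or> c = b0) y = filter (\<lambda>c. c = a0 \<or> c = b0) z"
    unfolding y z by auto
  then show ?case using step.IH by simp
qed

definition firsts :: "nat \<Rightarrow> (nat \<Rightarrow> nat \<Rightarrow> bool) \<Rightarrow> nat list \<Rightarrow> nat set" where
  "firsts L E x = {v \<in> {1..L}. \<exists>y. (x, v#y) \<in> (comm_step E)\<^sup>*}"

lemma firsts_sub: "firsts L E x \<subseteq> set x"
  unfolding firsts_def using rt_set by fastforce

lemma firsts_fin: "finite (firsts L E x)"
  unfolding firsts_def by auto

lemma firsts_clique: assumes g: "simple_graph L E" shows "is_clique L E (firsts L E x)"
  unfolding is_clique_def
proof (intro conjI ballI impI)
  show "firsts L E x \<subseteq> {1..L}" unfolding firsts_def by auto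
next
  fix a b assume a: "a \<in> firsts L E x" and b: "b \<in> firsts L E x" and ne: "a \<noteq> b"
  show "E a b"
  proof (rule ccontr)
    assume n1: "\<not> E a b"
    then have n2: "\<not> E b a" using g unfolding simple_graph_def by blast
    have irr: "\<forall>a. \<not>E a a" using g unfolding simple_graph_def by blast
    obtain y z where y: "(x, a#y) \<in> (comm_step E)\<^sup>*" and z: "(x, b#z) \<in> (comm_step E)\<^sup>*"
      using a b unfolding firsts_def by blast
    define P where "P = (\<lambda>c. c = a \<or> c = b)"
    have "filter P (a#y) = filter P (b#z)"
      using rt_filter[OF irr n1 n2 y] rt_filter[OF irr n1 n2 z] unfolding P_def by metis
    moreover have "filter P (a#y) = a # filter P y" "filter P (b#z) = b # filter P z"
      unfolding P_def by auto
    ultimately show False using ne by simp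
  qed
qed

lemma clique_fin: "finite {card C | C. is_clique L E C \<and> P C}"
proof -
  have "{card C | C. is_clique L E C \<and> P C} \<subseteq> card ` Pow {1..L}"
    unfolding is_clique_def by auto
  then show ?thesis by (rule finite_subset) auto
qed

lemma clique_le: assumes "is_clique L E C" "v \<in> C" shows "card C \<le> max_clique_at L E v"
  unfolding max_clique_at_def
  by (rule Max_ge[OF clique_fin[of L E "\<lambda>C. v \<in> C"]]) (use assms in blast)

lemma maxc_le_number: assumes "v \<in> {1..L}" shows "max_clique_at L E v \<le> clique_number L E"
  unfolding max_clique_at_def clique_number_def
proof (rule Max_mono)
  show "{card C |C. is_clique L E C \<and> v \<in> C} \<subseteq> {card C |C. is_clique L E C}" by blast
  have "is_clique L E {v}" using assms unfolding is_clique_def by auto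
  then show "{card C |C. is_clique L E C \<and> v \<in> C} \<noteq> {}" by blast
  show "finite {card C |C. is_clique L E C}" using clique_fin[of L E "\<lambda>_. True"] by simp
qed



definition GP :: "nat \<Rightarrow> (nat\<Rightarrow>nat\<Rightarrow>bool) \<Rightarrow> (nat\<Rightarrow>nat) \<Rightarrow> nat list set \<Rightarrow> nat \<Rightarrow> int list \<Rightarrow> nat list set list set" where
  "GP L E i T s es = {ws. length ws = length es \<and> set ws \<subseteq> range (trace_of E) \<and>
     (\<forall>k<length es. (es!k = 1 \<longrightarrow> lmul_eq E (ws!k) (i (s+k+1)) (if k=0 then T else ws!(k-1)))
        \<and> (es!k \<noteq> 1 \<longrightarrow> (\<exists>v\<in>{1..L}. lmul_eq E (if k=0 then T else ws!(k-1)) v (ws!k))))}"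

lemma GP_Nil: "GP L E i T s [] = {[]}"
  by (auto simp: GP_def)

lemma GP_Cons_mem:
  assumes "ws \<in> GP L E i T s (e#es)"
  shows "\<exists>w ws'. ws = w#ws' \<and> w \<in> range (trace_of E) \<and> ws' \<in> GP L E i w (Suc s) es
     \<and> (e = 1 \<longrightarrow> lmul_eq E w (i (Suc s)) T) \<and> (e \<noteq> 1 \<longrightarrow> (\<exists>v\<in>{1..L}. lmul_eq E T v w))"
proof -
  have len: "length ws = Suc (length es)" and st: "set ws \<subseteq> range (trace_of E)"
    and c: "\<And>k. k < Suc (length es) \<Longrightarrow> ((e#es)!k = 1 \<longrightarrow> lmul_eq E (ws!k) (i (s+k+1)) (if k=0 then T else ws!(k-1)))
        \<and> ((e#es)!k \<noteq> 1 \<longrightarrow> (\<exists>v\<in>{1..L}. lmul_eq E (if k=0 then T else ws!(k-1)) v (ws!k)))"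
    using assms unfolding GP_def by auto
  obtain w ws' where ws: "ws = w#ws'" using len by (cases ws) auto
  have c0: "(e = 1 \<longrightarrow> lmul_eq E w (i (Suc s)) T) \<and> (e \<noteq> 1 \<longrightarrow> (\<exists>v\<in>{1..L}. lmul_eq E T v w))"
    using c[of 0] ws by simp
  have "ws' \<in> GP L E i w (Suc s) es"
    unfolding GP_def
  proof (intro CollectI conjI allI impI)
    show "length ws' = length es" using len ws by simp
    show "set ws' \<subseteq> range (trace_of E)" using st ws by simp
  next
    fix k assume k: "k < length es" "es ! k = 1"
    have "Suc k < Suc (length es)" using k by simp
    from c[OF this] k show "lmul_eq E (ws' ! k) (i (Suc s + k + 1)) (if k = 0 then w else ws' ! (k - 1))"
      using ws by (cases k) auto
  next
    fix k assume k: "k < length es" "es ! k \<noteq> 1"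
    have "Suc k < Suc (length es)" using k by simp
    from c[OF this] k show "\<exists>v\<in>{1..L}. lmul_eq E (if k = 0 then w else ws' ! (k - 1)) v (ws' ! k)"
      using ws by (cases k) auto
  qed
  then show ?thesis using ws st c0 by auto
qed

lemma GP_up: assumes sym: "\<forall>a b. E a b \<longrightarrow> E b a"
  shows "GP L E i (trace_of E x) s (1#es) \<subseteq>
     Cons (trace_of E (i (Suc s) # x)) ` GP L E i (trace_of E (i (Suc s) # x)) (Suc s) es"
proof
  fix ws assume "ws \<in> GP L E i (trace_of E x) s (1#es)"
  from GP_Cons_mem[OF this] obtain w ws' where ws: "ws = w#ws'" "ws' \<in> GP L E i w (Suc s) es"
    "lmul_eq E w (i (Suc s)) (trace_of E x)" by auto
  then have "w = trace_of E (i (Suc s) # x)" using lmul_trace[OF sym] by blast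
  then show "ws \<in> Cons (trace_of E (i (Suc s) # x)) ` GP L E i (trace_of E (i (Suc s) # x)) (Suc s) es"
    using ws by auto
qed

lemma GP_down: assumes g: "simple_graph L E" and e: "e \<noteq> 1"
  shows "GP L E i (trace_of E x) s (e#es) \<subseteq>
     (\<Union>v\<in>firsts L E x. Cons (trace_of E (remove1 v x)) ` GP L E i (trace_of E (remove1 v x)) (Suc s) es)"
proof
  have sym: "\<forall>a b. E a b \<longrightarrow> E b a" and irr: "\<forall>a. \<not> E a a" using g unfolding simple_graph_def by auto
  fix ws assume "ws \<in> GP L E i (trace_of E x) s (e#es)"
  from GP_Cons_mem[OF this] e obtain w ws' v where ws: "ws = w#ws'" "ws' \<in> GP L E i w (Suc s) es"
    "w \<in> range (trace_of E)" "v \<in> {1..L}" "lmul_eq E (trace_of E x) v w" by auto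
  then obtain z where z: "w = trace_of E z" by auto
  have "trace_of E x = trace_of E (v#z)" using ws(5) lmul_trace[OF sym] z by blast
  then have xz: "(x, v#z) \<in> (comm_step E)\<^sup>*" using trace_eq_iff[OF sym] by blast
  then have vf: "v \<in> firsts L E x" using ws(4) unfolding firsts_def by blast
  have "(remove1 v x, z) \<in> (comm_step E)\<^sup>*" using rt_remove1[OF irr xz, of v] by simp
  then have "w = trace_of E (remove1 v x)" using z trace_eq_iff[OF sym] by metis
  then show "ws \<in> (\<Union>v\<in>firsts L E x. Cons (trace_of E (remove1 v x)) ` GP L E i (trace_of E (remove1 v x)) (Suc s) es)"
    using ws vf by auto
qed

lemma GP_finite: assumes g: "simple_graph L E"
  shows "finite (GP L E i (trace_of E x) s es)"
proof (induction es arbitrary: x s)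
  case Nil then show ?case by (simp add: GP_Nil)
next
  case (Cons e es)
  have sym: "\<forall>a b. E a b \<longrightarrow> E b a" using g unfolding simple_graph_def by auto
  show ?case
  proof (cases "e = 1")
    case True
    then show ?thesis using GP_up[OF sym] Cons.IH by (meson finite_imageI finite_subset)
  next
    case False
    show ?thesis
      by (rule finite_subset[OF GP_down[OF g False]]) (use Cons.IH firsts_fin in blast)
  qed
qed

definition F :: "(nat \<Rightarrow> nat) \<Rightarrow> nat list \<Rightarrow> nat" where
  "F c x = prod_mset (image_mset c (mset x))"

fun Pu :: "(nat \<Rightarrow> nat) \<Rightarrow> (nat \<Rightarrow> nat) \<Rightarrow> nat \<Rightarrow> int list \<Rightarrow> nat" where
  "Pu c i s [] = 1"
| "Pu c i s (e#es) = (if e = 1 then c (i (Suc s)) else 1) * Pu c i (Suc s) es"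

lemma F_remove1: assumes "v \<in> set x" shows "F c x = c v * F c (remove1 v x)"
proof -
  from assms have "v \<in># mset x" by simp
  then obtain M where M: "mset x = add_mset v M" by (blast dest: multi_member_split)
  then have R: "mset (remove1 v x) = M" by simp
  show ?thesis unfolding F_def by (simp del: mset_remove1 add: M R)
qed

lemma F_pos: assumes "set x \<subseteq> {1..L}" shows "1 \<le> F (max_clique_at L E) x"
  using assms
proof (induction x)
  case Nil then show ?case by (simp add: F_def)
next
  case (Cons a x)
  have "is_clique L E {a}" using Cons.prems unfolding is_clique_def by auto
  then have "1 \<le> max_clique_at L E a" using clique_le[of L E "{a}" a] by simp
  moreover have "1 \<le> F (max_clique_at L E) x" using Cons by simp
  ultimately show ?case by (simp add: F_def)
qed

lemma sumF: assumes g: "simple_graph L E"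
  shows "(\<Sum>v\<in>firsts L E x. F (max_clique_at L E) (remove1 v x)) \<le> F (max_clique_at L E) x"
proof -
  let ?c = "max_clique_at L E" and ?M = "firsts L E x"
  have key: "card ?M * F ?c (remove1 v x) \<le> F ?c x" if v: "v \<in> ?M" for v
  proof -
    have "card ?M \<le> ?c v" using clique_le[OF firsts_clique[OF g] v] .
    then have "card ?M * F ?c (remove1 v x) \<le> ?c v * F ?c (remove1 v x)" by simp
    also have "\<dots> = F ?c x" using F_remove1 firsts_sub v by (metis subsetD)
    finally show ?thesis .
  qed
  have "card ?M * (\<Sum>v\<in>?M. F ?c (remove1 v x)) = (\<Sum>v\<in>?M. card ?M * F ?c (remove1 v x))"
    by (simp add: sum_distrib_left)
  also have "\<dots> \<le> (\<Sum>v\<in>?M. F ?c x)" by (rule sum_mono) (use key in blast)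
  also have "\<dots> = card ?M * F ?c x" by simp
  finally have *: "card ?M * (\<Sum>v\<in>?M. F ?c (remove1 v x)) \<le> card ?M * F ?c x" .
  show ?thesis
  proof (cases "card ?M = 0")
    case True
    then have "?M = {}" using firsts_fin by auto
    then show ?thesis by simp
  next
    case False
    then show ?thesis using * by simp
  qed
qed

lemma shiftlab: assumes "\<forall>k<length (e#es). (e#es)!k = 1 \<longrightarrow> i (s+k+1) \<in> {1..L}"
  shows "\<forall>k<length es. es ! k = 1 \<longrightarrow> i (Suc s + k + 1) \<in> {1..L}"
proof (intro allI impI)
  fix k assume k: "k < length es" "es ! k = 1"
  then have "Suc k < length (e#es)" "(e#es) ! Suc k = 1" by simp_all
  then have "i (s + Suc k + 1) \<in> {1..L}" using assms by blast
  then show "i (Suc s + k + 1) \<in> {1..L}" by simp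
qed

lemma boundA: assumes g: "simple_graph L E"
  shows "set x \<subseteq> {1..L} \<Longrightarrow> (\<forall>k<length es. es!k = 1 \<longrightarrow> i (s+k+1) \<in> {1..L}) \<Longrightarrow>
    card (GP L E i (trace_of E x) s es) \<le> F (max_clique_at L E) x * Pu (max_clique_at L E) i s es"
proof (induction es arbitrary: x s)
  case Nil then show ?case using F_pos[OF Nil(1), of E] by (simp add: GP_Nil)
next
  case (Cons e es)
  have sym: "\<forall>a b. E a b \<longrightarrow> E b a" using g unfolding simple_graph_def by auto
  let ?c = "max_clique_at L E"
  show ?case
  proof (cases "e = 1")
    case True
    let ?x = "i (Suc s) # x"
    have "card (GP L E i (trace_of E x) s (e#es)) \<le> card (Cons (trace_of E ?x) ` GP L E i (trace_of E ?x) (Suc s) es)"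
      using True GP_up[OF sym] by (intro card_mono finite_imageI GP_finite[OF g]) auto
    also have "\<dots> \<le> card (GP L E i (trace_of E ?x) (Suc s) es)" by (rule card_image_le) (rule GP_finite[OF g])
    also have "\<dots> \<le> F ?c ?x * Pu ?c i (Suc s) es"
    proof (rule Cons.IH)
      have "0 < length (e#es)" "(e#es) ! 0 = 1" using True by simp_all
      then have "i (s + 0 + 1) \<in> {1..L}" using Cons.prems(2) by blast
      then show "set ?x \<subseteq> {1..L}" using Cons.prems(1) by simp
      show "\<forall>k<length es. es ! k = 1 \<longrightarrow> i (Suc s + k + 1) \<in> {1..L}"
        by (rule shiftlab[OF Cons.prems(2)])
    qed
    also have "\<dots> = F ?c x * Pu ?c i s (e#es)" using True by (simp add: F_def)
    finally show ?thesis .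
  next
    case False
    let ?G = "\<lambda>v. GP L E i (trace_of E (remove1 v x)) (Suc s) es"
    have "card (GP L E i (trace_of E x) s (e#es)) \<le> card (\<Union>v\<in>firsts L E x. Cons (trace_of E (remove1 v x)) ` ?G v)"
      by (rule card_mono[OF _ GP_down[OF g False]]) (intro finite_UN_I firsts_fin finite_imageI GP_finite[OF g])
    also have "\<dots> \<le> (\<Sum>v\<in>firsts L E x. card (Cons (trace_of E (remove1 v x)) ` ?G v))"
      by (rule card_UN_le) (rule firsts_fin)
    also have "\<dots> \<le> (\<Sum>v\<in>firsts L E x. F ?c (remove1 v x) * Pu ?c i (Suc s) es)"
    proof (rule sum_mono)
      fix v assume "v \<in> firsts L E x"
      have h1: "set (remove1 v x) \<subseteq> {1..L}" by (rule order_trans[OF set_remove1_subset Cons.prems(1)])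
      have h2: "\<forall>k<length es. es ! k = 1 \<longrightarrow> i (Suc s + k + 1) \<in> {1..L}"
        by (rule shiftlab[OF Cons.prems(2)])
      show "card (Cons (trace_of E (remove1 v x)) ` ?G v) \<le> F ?c (remove1 v x) * Pu ?c i (Suc s) es"
        using card_image_le[OF GP_finite[OF g], of "Cons (trace_of E (remove1 v x))" i "remove1 v x" "Suc s" es]
          Cons.IH[OF h1 h2] by linarith
    qed
    also have "\<dots> = (\<Sum>v\<in>firsts L E x. F ?c (remove1 v x)) * Pu ?c i (Suc s) es"
      by (simp add: sum_distrib_right)
    also have "\<dots> \<le> F ?c x * Pu ?c i (Suc s) es" using sumF[OF g] by simp
    also have "\<dots> = F ?c x * Pu ?c i s (e#es)" using False by simp
    finally show ?thesis .
  qed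
qed

fun H :: "nat \<Rightarrow> int list \<Rightarrow> nat" where
  "H h [] = 1"
| "H h (e#es) = (if e = 1 then H (Suc h) es else h * H (h - 1) es)"

lemma boundB: assumes g: "simple_graph L E"
  shows "card (GP L E i (trace_of E x) s es) \<le> H (length x) es"
proof (induction es arbitrary: x s)
  case Nil then show ?case by (simp add: GP_Nil)
next
  case (Cons e es)
  have sym: "\<forall>a b. E a b \<longrightarrow> E b a" using g unfolding simple_graph_def by auto
  show ?case
  proof (cases "e = 1")
    case True
    let ?x = "i (Suc s) # x"
    have "card (GP L E i (trace_of E x) s (e#es)) \<le> card (Cons (trace_of E ?x) ` GP L E i (trace_of E ?x) (Suc s) es)"
      using True GP_up[OF sym] by (intro card_mono finite_imageI GP_finite[OF g]) auto
    also have "\<dots> \<le> card (GP L E i (trace_of E ?x) (Suc s) es)" by (rule card_image_le) (rule GP_finite[OF g])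
    also have "\<dots> \<le> H (length ?x) es" by (rule Cons.IH)
    also have "\<dots> = H (length x) (e#es)" using True by simp
    finally show ?thesis .
  next
    case False
    let ?G = "\<lambda>v. GP L E i (trace_of E (remove1 v x)) (Suc s) es"
    have "card (GP L E i (trace_of E x) s (e#es)) \<le> card (\<Union>v\<in>firsts L E x. Cons (trace_of E (remove1 v x)) ` ?G v)"
      by (rule card_mono[OF _ GP_down[OF g False]]) (intro finite_UN_I firsts_fin finite_imageI GP_finite[OF g])
    also have "\<dots> \<le> (\<Sum>v\<in>firsts L E x. card (Cons (trace_of E (remove1 v x)) ` ?G v))"
      by (rule card_UN_le) (rule firsts_fin)
    also have "\<dots> \<le> (\<Sum>v\<in>firsts L E x. H (length (remove1 v x)) es)"
      by (rule sum_mono) (meson Cons.IH card_image_le GP_finite[OF g] le_trans)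
    also have "\<dots> = (\<Sum>v\<in>firsts L E x. H (length x - 1) es)"
      by (rule sum.cong) (use firsts_sub in \<open>auto simp: length_remove1\<close>)
    also have "\<dots> = card (firsts L E x) * H (length x - 1) es" by simp
    also have "\<dots> \<le> length x * H (length x - 1) es"
    proof -
      have "card (firsts L E x) \<le> card (set x)" by (rule card_mono) (auto simp: firsts_sub)
      also have "\<dots> \<le> length x" by (rule card_length)
      finally show ?thesis by simp
    qed
    also have "\<dots> = H (length x) (e#es)" using False by simp
    finally show ?thesis .
  qed
qed



definition nup :: "int list \<Rightarrow> nat" where "nup es = length (filter (\<lambda>e. e = 1) es)"
definition ndown :: "int list \<Rightarrow> nat" where "ndown es = length (filter (\<lambda>e. e \<noteq> 1) es)"

lemma counts: "set es \<subseteq> {1,-1} \<Longrightarrow> sum_list es = int (nup es) - int (ndown es)"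
  by (induction es) (auto simp: nup_def ndown_def)

lemma counts_len: "nup es + ndown es = length es"
  unfolding nup_def ndown_def by (rule sum_length_filter_compl)

lemma H_fact: "set es \<subseteq> {1,-1} \<Longrightarrow> int h + sum_list es = 0 \<Longrightarrow> H h es \<le> fact (ndown es)"
proof (induction es arbitrary: h)
  case Nil then show ?case by simp
next
  case (Cons e es)
  have st: "set es \<subseteq> {1,-1}" using Cons.prems(1) by simp
  show ?case
  proof (cases "e = 1")
    case True
    have "int (Suc h) + sum_list es = 0" using Cons.prems(2) True by simp
    then have "H (Suc h) es \<le> fact (ndown es)" using Cons.IH[OF st] by blast
    then show ?thesis using True by (simp add: ndown_def)
  next
    case False
    then have em: "e = -1" using Cons.prems(1) by auto
    show ?thesis
    proof (cases "h = 0")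
      case True then show ?thesis using False by simp
    next
      case h0: False
      have "int (h - 1) + sum_list es = 0" using Cons.prems(2) em h0 by simp
      then have IH: "H (h - 1) es \<le> fact (ndown es)" using Cons.IH[OF st] by blast
      have "sum_list es = int (nup es) - int (ndown es)" using counts[OF st] .
      then have hle: "h \<le> Suc (ndown es)" using Cons.prems(2) em by simp
      have "H h (e#es) = h * H (h - 1) es" using False by simp
      also have "\<dots> \<le> Suc (ndown es) * fact (ndown es)" using hle IH by (rule mult_le_mono)
      also have "\<dots> = fact (ndown (e#es))" using False by (simp add: ndown_def)
      finally show ?thesis .
    qed
  qed
qed

lemma shiftQ: assumes "\<forall>k<length (e#es). (e#es)!k = 1 \<longrightarrow> Q (s+k+1)"
  shows "\<forall>k<length es. es ! k = 1 \<longrightarrow> Q (Suc s + k + 1)"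
proof (intro allI impI)
  fix k assume k: "k < length es" "es ! k = 1"
  then have "Suc k < length (e#es)" "(e#es) ! Suc k = 1" by simp_all
  then have "Q (s + Suc k + 1)" using assms by blast
  then show "Q (Suc s + k + 1)" by simp
qed

lemma Pu_le: "(\<forall>k<length es. es!k = 1 \<longrightarrow> c (i (s+k+1)) \<le> w) \<Longrightarrow> Pu c i s es \<le> w ^ nup es"
proof (induction es arbitrary: s)
  case Nil then show ?case by (simp add: nup_def)
next
  case (Cons e es)
  have IH: "Pu c i (Suc s) es \<le> w ^ nup es"
    using Cons.IH shiftQ[OF Cons.prems] by blast
  show ?case
  proof (cases "e = 1")
    case True
    have "0 < length (e#es)" "(e#es) ! 0 = 1" using True by simp_all
    then have "c (i (s + 0 + 1)) \<le> w" using Cons.prems by blast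
    then have "c (i (Suc s)) * Pu c i (Suc s) es \<le> w * w ^ nup es" using IH by (simp add: mult_le_mono)
    then show ?thesis using True by (simp add: nup_def)
  next
    case False
    then show ?thesis using IH by (simp add: nup_def)
  qed
qed

lemma Pu_prod: "Pu c i s es = (\<Prod>k<length es. if es!k = 1 then c (i (s+k+1)) else 1)"
proof (induction es arbitrary: s)
  case Nil then show ?case by simp
next
  case (Cons e es)
  have "Pu c i s (e#es) = (if e = 1 then c (i (Suc s)) else 1) * (\<Prod>k<length es. if es!k = 1 then c (i (Suc s+k+1)) else 1)"
    by (simp add: Cons.IH)
  also have "\<dots> = (\<Prod>k<Suc (length es). if (e#es)!k = 1 then c (i (s+k+1)) else 1)"
    by (subst prod.lessThan_Suc_shift) (auto intro!: prod.cong)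
  finally show ?case by simp
qed

lemma Pu_up: "Pu c i 0 eps = (\<Prod>k\<in>up_steps eps. c (i k))"
proof -
  have "(\<Prod>k\<in>up_steps eps. c (i k)) = (\<Prod>k\<in>{1..length eps}. if eps!(k-1) = 1 then c (i k) else 1)"
    unfolding up_steps_def by (rule prod.inter_filter) simp
  also have "\<dots> = (\<Prod>k<length eps. if eps!k = 1 then c (i (Suc k)) else 1)"
    unfolding One_nat_def prod.atLeast1_atMost_eq by simp
  also have "\<dots> = Pu c i 0 eps" unfolding Pu_prod by (auto intro!: prod.cong)
  finally show ?thesis by simp
qed



lemma paths_sub_GP: assumes g: "simple_graph L E"
  shows "paths_eps_lab L E p eps i \<subseteq> GP L E i (trace_of E []) 0 eps"
proof
  have sym: "\<forall>a b. E a b \<longrightarrow> E b a" using g unfolding simple_graph_def by auto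
  fix ws assume "ws \<in> paths_eps_lab L E p eps i"
  then have len: "length ws = 2 * p" and st: "set ws \<subseteq> traces L E"
    and adj: "\<forall>k\<in>{1..2*p}. tr_adj L E (pw E ws (k - 1)) (pw E ws k)"
    and pe: "path_eps E ws = eps"
    and lab: "\<forall>k\<in>up_steps eps. lmul_eq E (pw E ws k) (i k) (pw E ws (k - 1))"
    unfolding paths_eps_lab_def paths_eps_def paths_def by auto
  have "length (path_eps E ws) = length ws" by (simp only: path_eps_def length_map length_upt diff_Suc_1)
  then have leq: "length eps = length ws" using pe by simp
  have rng: "set ws \<subseteq> range (trace_of E)" using st unfolding traces_def by auto
  have pwk: "\<And>k. pw E ws k = (if k=0 then trace_of E [] else ws!(k-1))" by (simp add: pw_def tr_empty_def)
  have pwS: "\<And>k. pw E ws (Suc k) = ws!k" by (simp add: pw_def)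
  show "ws \<in> GP L E i (trace_of E []) 0 eps"
    unfolding GP_def
  proof (intro CollectI conjI allI impI)
    show "length ws = length eps" using leq by simp
    show "set ws \<subseteq> range (trace_of E)" by (rule rng)
  next
    fix k assume k: "k < length eps" "eps ! k = 1"
    then have "Suc k \<in> up_steps eps" unfolding up_steps_def by auto
    then have "lmul_eq E (pw E ws (Suc k)) (i (Suc k)) (pw E ws (Suc k - 1))" using lab by blast
    then show "lmul_eq E (ws ! k) (i (0 + k + 1)) (if k = 0 then trace_of E [] else ws ! (k - 1))"
      using pwk[of k] pwS[of k] by simp
  next
    fix k assume k: "k < length eps" "eps ! k \<noteq> 1"
    have "path_eps E ws ! k = (if tlen (pw E ws (Suc k)) > tlen (pw E ws k) then 1 else -1)"
      using k leq by (simp add: path_eps_def del: upt_Suc)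
    then have ntl: "\<not> tlen (pw E ws (Suc k)) > tlen (pw E ws k)" using pe k by auto
    have "Suc k \<in> {1..2*p}" using k leq len by auto
    then have "tr_adj L E (pw E ws k) (pw E ws (Suc k))" using adj by fastforce
    then obtain v where v: "v \<in> {1..L}"
      and vv: "lmul_eq E (pw E ws k) v (pw E ws (Suc k)) \<or> lmul_eq E (pw E ws (Suc k)) v (pw E ws k)"
      unfolding tr_adj_def by blast
    have "pw E ws k \<in> range (trace_of E)"
    proof (cases k)
      case 0 then show ?thesis using pwk by simp
    next
      case (Suc m)
      then have "m < length ws" using k leq by simp
      then show ?thesis using pwk rng Suc by (simp add: subset_iff)
    qed
    then obtain z where z: "pw E ws k = trace_of E z" by auto
    have "\<not> lmul_eq E (pw E ws (Suc k)) v (pw E ws k)"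
    proof
      assume "lmul_eq E (pw E ws (Suc k)) v (pw E ws k)"
      then have "pw E ws (Suc k) = trace_of E (v#z)" using z lmul_trace[OF sym] by simp
      then show False using ntl z by (simp add: tlen_trace)
    qed
    then have "lmul_eq E (pw E ws k) v (pw E ws (Suc k))" using vv by blast
    then show "\<exists>v\<in>{1..L}. lmul_eq E (if k = 0 then trace_of E [] else ws ! (k - 1)) v (ws ! k)"
      using v pwk[of k] pwS[of k] by auto
  qed
qed

theorem proposition4p1:
  fixes L p :: nat and E :: "nat \<Rightarrow> nat \<Rightarrow> bool" and eps :: "int list" and i :: "nat \<Rightarrow> nat"
  assumes "simple_graph L E"
    and "p \<ge> 1"
    and "dyck p eps"
    and "\<forall>k\<in>up_steps eps. i k \<in> {1..L}"
  shows "card (paths_eps_lab L E p eps i)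
           \<le> min (\<Prod>k\<in>up_steps eps. max_clique_at L E (i k)) (fact p)
       \<and> card (paths_eps_lab L E p eps i) \<le> min (clique_number L E ^ p) (fact p)"
proof -
  note g = assms(1)
  let ?c = "max_clique_at L E"
  let ?G = "GP L E i (trace_of E []) 0 eps"
  have len: "length eps = 2 * p" and st: "set eps \<subseteq> {1,-1}" and sm: "sum_list eps = 0"
    using assms(3) unfolding dyck_def by auto
  have cnt: "int (nup eps) - int (ndown eps) = 0" using counts[OF st] sm by simp
  have nd: "ndown eps = p" and nu: "nup eps = p" using cnt counts_len[of eps] len by auto
  have c0: "card (paths_eps_lab L E p eps i) \<le> card ?G"
    by (rule card_mono[OF GP_finite[OF g] paths_sub_GP[OF g]])
  have labs: "\<forall>k<length eps. eps!k = 1 \<longrightarrow> i (0+k+1) \<in> {1..L}"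
  proof (intro allI impI)
    fix k assume "k < length eps" "eps ! k = 1"
    then have "Suc k \<in> up_steps eps" unfolding up_steps_def by auto
    then show "i (0+k+1) \<in> {1..L}" using assms(4) by simp
  qed
  have "card ?G \<le> F ?c [] * Pu ?c i 0 eps" by (rule boundA[OF g _ labs]) simp
  then have A: "card ?G \<le> (\<Prod>k\<in>up_steps eps. ?c (i k))" by (simp add: F_def Pu_up)
  have "card ?G \<le> H 0 eps" using boundB[OF g, where x="[]"] by simp
  also have "\<dots> \<le> fact (ndown eps)" by (rule H_fact[OF st]) (simp add: sm)
  finally have B: "card ?G \<le> fact p" using nd by simp
  have "Pu ?c i 0 eps \<le> clique_number L E ^ nup eps"
    by (rule Pu_le) (use labs maxc_le_number in blast)
  then have C: "(\<Prod>k\<in>up_steps eps. ?c (i k)) \<le> clique_number L E ^ p" using nu by (simp add: Pu_up)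
  show ?thesis using c0 A B C by simp
qed

end
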